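(* The map $J:\mathbb{D}\times\mathbb{D}\to\mathbb{CP}^3$ defined by $J(z,w)=(z-w:1-zw:i(1+zw):-i(z+w))$ is a biholomorphism from $\mathbb{D}\times\mathbb{D}$ onto $\mathcal{D}_1^{(2)}$.
   Context: $\mathbb{D}$ is the open unit disc in $\mathbb{C}$; points of $\mathbb{CP}^3$ are written in homogeneous coordinates $(s:t:u:v)$. The domain $\mathcal{D}_1^{(2)}\subset\mathbb{CP}^3$ is $\mathcal{D}_1^{(2)}=\{(1:t:u:v): |t|^2+|u|^2-|v|^2>1,\ t^2+u^2-v^2=1,\ \mathrm{Im}(u(\overline{t}+\overline{v}))>0\}\cup\{(0:t:u:v): t^2+u^2-v^2=0,\ \mathrm{Im}(u(\overline{t}+\overline{v}))>0\}$. *)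

theory Defs
  imports "HOL-Analysis.Analysis"
begin

definition holo_fun :: "(complex^'n \<Rightarrow> complex) \<Rightarrow> (complex^'n) set \<Rightarrow> bool" where
  "holo_fun f S \<longleftrightarrow> open S \<and>
     (\<forall>p\<in>S. \<exists>f'. (f has_derivative f') (at p) \<and> (\<forall>c v. f' (c *s v) = c * f' v))"

definition holo_map :: "(complex^'n \<Rightarrow> complex^'m) \<Rightarrow> (complex^'n) set \<Rightarrow> bool" where
  "holo_map g S \<longleftrightarrow> (\<forall>j. holo_fun (\<lambda>q. g q $ j) S)"

text \<open>Complex projective space CP^3: a point is the complex line through a nonzero
 vector of C^4 (with the zero vector removed); coordinates (s:t:u:v) = (x$1:x$2:x$3:x$4).\<close>
definition proj :: "complex^4 \<Rightarrow> (complex^4) set" where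
  "proj x = {c *s x | c. c \<noteq> 0}"

definition CP3 :: "(complex^4) set set" where
  "CP3 = proj ` (UNIV - {0})"

definition holo_into_CP3 :: "(complex^'n \<Rightarrow> (complex^4) set) \<Rightarrow> (complex^'n) set \<Rightarrow> bool" where
  "holo_into_CP3 F S \<longleftrightarrow> open S \<and>
     (\<forall>p\<in>S. \<exists>U g. open U \<and> p \<in> U \<and> U \<subseteq> S \<and> holo_map g U \<and>
        (\<forall>q\<in>U. g q \<noteq> 0 \<and> F q = proj (g q)))"

text \<open>A map on a subset A of CP^3 with values in C^m is holomorphic iff its pullback to
 the cone over A is locally the restriction of a holomorphic map on an open set of C^4
 (equivalently: in affine charts it locally extends holomorphically).\<close>
definition holo_from_CP3 :: "((complex^4) set \<Rightarrow> complex^'m) \<Rightarrow> (complex^4) set set \<Rightarrow> bool" where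
  "holo_from_CP3 \<phi> A \<longleftrightarrow> A \<subseteq> CP3 \<and>
     (\<forall>x. x \<noteq> 0 \<and> proj x \<in> A \<longrightarrow>
        (\<exists>W h. open W \<and> x \<in> W \<and> holo_map h W \<and>
           (\<forall>y\<in>W. y \<noteq> 0 \<and> proj y \<in> A \<longrightarrow> h y = \<phi> (proj y))))"

definition biholo_onto_CP3 :: "(complex^'n \<Rightarrow> (complex^4) set) \<Rightarrow> (complex^'n) set \<Rightarrow> (complex^4) set set \<Rightarrow> bool" where
  "biholo_onto_CP3 F S A \<longleftrightarrow> bij_betw F S A \<and> holo_into_CP3 F S \<and>
     holo_from_CP3 (inv_into S F) A"

definition bidisc :: "(complex^2) set" where
  "bidisc = {p. norm (p $ 1) < 1 \<and> norm (p $ 2) < 1}"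

definition Jmap :: "complex^2 \<Rightarrow> (complex^4) set" where
  "Jmap p = (let z = p $ 1; w = p $ 2 in
     proj (vector [z - w, 1 - z * w, \<i> * (1 + z * w), - \<i> * (z + w)]))"

definition D12 :: "(complex^4) set set" where
  "D12 = {proj x | x. x $ 1 = 1 \<and>
            (norm (x$2))\<^sup>2 + (norm (x$3))\<^sup>2 - (norm (x$4))\<^sup>2 > 1 \<and>
            (x$2)\<^sup>2 + (x$3)\<^sup>2 - (x$4)\<^sup>2 = 1 \<and>
            Im (x$3 * (cnj (x$2) + cnj (x$4))) > 0}
       \<union> {proj x | x. x $ 1 = 0 \<and>
            (x$2)\<^sup>2 + (x$3)\<^sup>2 - (x$4)\<^sup>2 = 0 \<and>
            Im (x$3 * (cnj (x$2) + cnj (x$4))) > 0}"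

end

theory Submission
  imports Defs
begin


definition cd :: "(complex^'n \<Rightarrow> complex) \<Rightarrow> complex^'n \<Rightarrow> bool" where
  "cd f p \<longleftrightarrow> (\<exists>f'. (f has_derivative f') (at p) \<and> (\<forall>c v. f' (c *s v) = c * f' v))"

lemma cd_nth: "cd (\<lambda>q. q $ i) p"
  unfolding cd_def
  by (rule exI[of _ "\<lambda>v. v $ i"]) (simp add: bounded_linear.has_derivative[OF bounded_linear_vec_nth])

lemma cd_const: "cd (\<lambda>q. k) p"
  unfolding cd_def by (rule exI[of _ "\<lambda>v. 0"]) simp

lemma cd_add: "cd f p \<Longrightarrow> cd g p \<Longrightarrow> cd (\<lambda>q. f q + g q) p"
  unfolding cd_def
  apply (elim exE conjE)
  subgoal for f' g' by (rule exI[of _ "\<lambda>v. f' v + g' v"]) (auto intro!: has_derivative_add simp: algebra_simps)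
  done

lemma cd_diff: "cd f p \<Longrightarrow> cd g p \<Longrightarrow> cd (\<lambda>q. f q - g q) p"
  unfolding cd_def
  apply (elim exE conjE)
  subgoal for f' g' by (rule exI[of _ "\<lambda>v. f' v - g' v"]) (auto intro!: has_derivative_diff simp: algebra_simps)
  done

lemma cd_mult: "cd f p \<Longrightarrow> cd g p \<Longrightarrow> cd (\<lambda>q. f q * g q) p"
  unfolding cd_def
  apply (elim exE conjE)
  subgoal for f' g' by (rule exI[of _ "\<lambda>v. f p * g' v + f' v * g p"]) (auto intro!: has_derivative_mult simp: algebra_simps)
  done

lemma cd_inverse: "cd f p \<Longrightarrow> f p \<noteq> 0 \<Longrightarrow> cd (\<lambda>q. inverse (f q)) p"
  unfolding cd_def
  apply (elim exE conjE)
  subgoal for f' by (rule exI[of _ "\<lambda>h. - (inverse (f p) * f' h * inverse (f p))"]) (use has_derivative_inverse[where f=f and x=p and f'=f' and S=UNIV] in simp)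
  done

lemma cd_divide: "cd f p \<Longrightarrow> cd g p \<Longrightarrow> g p \<noteq> 0 \<Longrightarrow> cd (\<lambda>q. f q / g q) p"
  using cd_mult[OF _ cd_inverse, of f p g] by (simp add: divide_inverse)

lemma holo_funI: "open S \<Longrightarrow> (\<And>p. p \<in> S \<Longrightarrow> cd f p) \<Longrightarrow> holo_fun f S"
  unfolding holo_fun_def cd_def by blast

lemma vector_4 [simp]:
 "(vector [x,y,z,w] ::('a::zero)^4)$1 = x"
 "(vector [x,y,z,w] ::('a::zero)^4)$2 = y"
 "(vector [x,y,z,w] ::('a::zero)^4)$3 = z"
 "(vector [x,y,z,w] ::('a::zero)^4)$4 = w"
  unfolding vector_def by simp_all



definition Jv :: "complex^2 \<Rightarrow> complex^4" where
  "Jv p = vector [p$1 - p$2, 1 - p$1 * p$2, \<i> * (1 + p$1 * p$2), - \<i> * (p$1 + p$2)]"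
definition Gv :: "complex^4 \<Rightarrow> complex^2" where
  "Gv x = vector [(x$1 + \<i>*x$4)/(x$2 - \<i>*x$3), (\<i>*x$4 - x$1)/(x$2 - \<i>*x$3)]"
definition Qf :: "complex^4 \<Rightarrow> real" where
  "Qf x = (norm (x$2))\<^sup>2 + (norm (x$3))\<^sup>2 - (norm (x$4))\<^sup>2 - (norm (x$1))\<^sup>2"
definition Imf :: "complex^4 \<Rightarrow> real" where
  "Imf x = Im (x$3 * (cnj (x$2) + cnj (x$4)))"
definition qf :: "complex^4 \<Rightarrow> complex" where
  "qf x = (x$2)\<^sup>2 + (x$3)\<^sup>2 - (x$4)\<^sup>2 - (x$1)\<^sup>2"

lemma Jmap_Jv: "Jmap p = proj (Jv p)"
  by (simp add: Jmap_def Jv_def Let_def)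

lemma proj_eq: "proj x = proj y \<longleftrightarrow> (\<exists>c. c \<noteq> 0 \<and> y = c *s x)"
proof
  assume "proj x = proj y"
  moreover have "y \<in> proj y" unfolding proj_def by (rule CollectI, rule exI[of _ 1]) simp
  ultimately show "\<exists>c. c \<noteq> 0 \<and> y = c *s x" unfolding proj_def by blast
next
  assume "\<exists>c. c \<noteq> 0 \<and> y = c *s x"
  then obtain c where c: "c \<noteq> 0" "y = c *s x" by blast
  show "proj x = proj y"
    unfolding proj_def
  proof (intro set_eqI iffI)
    fix u assume "u \<in> {d *s x |d. d \<noteq> 0}"
    then obtain d where "d \<noteq> 0" "u = d *s x" by blast
    then show "u \<in> {d *s y |d. d \<noteq> 0}" using c
      by (intro CollectI exI[of _ "d / c"]) (simp add: vector_smult_assoc)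
  next
    fix u assume "u \<in> {d *s y |d. d \<noteq> 0}"
    then obtain d where "d \<noteq> 0" "u = d *s y" by blast
    then show "u \<in> {d *s x |d. d \<noteq> 0}" using c
      by (intro CollectI exI[of _ "d * c"]) (simp add: vector_smult_assoc)
  qed
qed

lemma Gv_Jv: "Gv (Jv p) = p"
  unfolding vec_eq_iff forall_2 Gv_def Jv_def by (simp add: field_simps) 

lemma frac_scale: "(c::complex) \<noteq> 0 \<Longrightarrow> (c * a) / (c * b) = a / b"
  by simp

lemma Gv_scale: "c \<noteq> 0 \<Longrightarrow> Gv (c *s x) = Gv x"
proof -
  assume c: "c \<noteq> 0"
  have e1: "c * x$1 + \<i> * (c * x$4) = c * (x$1 + \<i> * x$4)"
   and e2: "c * x$2 - \<i> * (c * x$3) = c * (x$2 - \<i> * x$3)"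
   and e3: "\<i> * (c * x$4) - c * x$1 = c * (\<i> * x$4 - x$1)"
    by (simp_all add: algebra_simps)
  show ?thesis unfolding Gv_def using c
    by (simp only: vector_smult_component e1 e2 e3 frac_scale[OF c])
qed

lemma Qf_scale: "Qf (c *s x) = (norm c)\<^sup>2 * Qf x"
  unfolding Qf_def by (simp add: norm_mult power_mult_distrib algebra_simps)

lemma qf_scale: "qf (c *s x) = c\<^sup>2 * qf x"
  unfolding qf_def by (simp add: power_mult_distrib algebra_simps)

lemma Imf_scale: "Imf (c *s x) = (norm c)\<^sup>2 * Imf x"
  unfolding Imf_def vector_smult_component cmod_power2 by (simp add: power2_eq_square algebra_simps)

lemma qf_Jv: "qf (Jv p) = 0"
  unfolding qf_def Jv_def by (simp add: power2_eq_square algebra_simps)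

lemma Qf_Jv: "Qf (Jv p) = 2 * (1 - (norm (p$1))\<^sup>2) * (1 - (norm (p$2))\<^sup>2)"
  unfolding Qf_def Jv_def vector_4 cmod_power2 by (simp add: power2_eq_square algebra_simps)

lemma Imf_Jv: "Imf (Jv p) = 1 - (norm (p$1))\<^sup>2 * (norm (p$2))\<^sup>2 + (1 - (norm (p$2))\<^sup>2) * Im (p$1) + (1 - (norm (p$1))\<^sup>2) * Im (p$2)"
  unfolding Imf_def Jv_def vector_4 cmod_power2 by (simp add: power2_eq_square algebra_simps)



definition good :: "complex^4 \<Rightarrow> bool" where
  "good x \<longleftrightarrow> (x$1 = 1 \<and> Qf x > 0 \<or> x$1 = 0) \<and> qf x = 0 \<and> Imf x > 0"

lemma good_iff: "((x$1 = 1 \<and>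
            (norm (x$2))\<^sup>2 + (norm (x$3))\<^sup>2 - (norm (x$4))\<^sup>2 > 1 \<and>
            (x$2)\<^sup>2 + (x$3)\<^sup>2 - (x$4)\<^sup>2 = 1 \<and>
            Im (x$3 * (cnj (x$2) + cnj (x$4))) > 0) \<or>
          (x $ 1 = 0 \<and>
            (x$2)\<^sup>2 + (x$3)\<^sup>2 - (x$4)\<^sup>2 = 0 \<and>
            Im (x$3 * (cnj (x$2) + cnj (x$4))) > 0)) \<longleftrightarrow> good x"
proof (cases "x$1 = 1")
  case True
  have h1: "Qf x > 0 \<longleftrightarrow> (norm (x$2))\<^sup>2 + (norm (x$3))\<^sup>2 - (norm (x$4))\<^sup>2 > 1"
    unfolding Qf_def True by simp
  have h2: "qf x = 0 \<longleftrightarrow> (x$2)\<^sup>2 + (x$3)\<^sup>2 - (x$4)\<^sup>2 = 1"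
    unfolding qf_def True by simp
  show ?thesis unfolding good_def Imf_def h1 h2 using True by simp
next
  case False
  then show ?thesis unfolding good_def Qf_def qf_def Imf_def by (cases "x$1 = 0") simp_all
qed

lemma D12_good: "D12 = {proj x | x. good x}"
proof -
  have "D12 = {proj x | x. ((x$1 = 1 \<and>
            (norm (x$2))\<^sup>2 + (norm (x$3))\<^sup>2 - (norm (x$4))\<^sup>2 > 1 \<and>
            (x$2)\<^sup>2 + (x$3)\<^sup>2 - (x$4)\<^sup>2 = 1 \<and>
            Im (x$3 * (cnj (x$2) + cnj (x$4))) > 0) \<or>
          (x $ 1 = 0 \<and>
            (x$2)\<^sup>2 + (x$3)\<^sup>2 - (x$4)\<^sup>2 = 0 \<and>
            Im (x$3 * (cnj (x$2) + cnj (x$4))) > 0))}"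
    unfolding D12_def by blast
  then show ?thesis by (simp only: good_iff)
qed

lemma real_key1:
  fixes a b :: real
  assumes "a < 1" "b < 1" "0 \<le> a" "0 \<le> b" "\<bar>y1\<bar> \<le> a" "\<bar>y2\<bar> \<le> b"
  shows "1 - a\<^sup>2 * b\<^sup>2 + (1 - b\<^sup>2) * y1 + (1 - a\<^sup>2) * y2 > 0"
proof -
  have "(1 - b\<^sup>2) * y1 \<ge> (1 - b\<^sup>2) * (-a)"
    using assms by (intro mult_left_mono) (auto simp: power2_eq_square mult_le_one)
  moreover have "(1 - a\<^sup>2) * y2 \<ge> (1 - a\<^sup>2) * (-b)"
    using assms by (intro mult_left_mono) (auto simp: power2_eq_square mult_le_one)
  moreover have "1 - a\<^sup>2 * b\<^sup>2 + (1 - b\<^sup>2) * (-a) + (1 - a\<^sup>2) * (-b) = (1-a)*(1-b)*(1-a*b)"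
    by (simp add: power2_eq_square algebra_simps)
  moreover have "a*b \<le> a" using assms by (intro mult_left_le) auto
  moreover have "(1-a)*(1-b)*(1-a*b) > 0"
    using assms calculation by (intro mult_pos_pos) auto
  ultimately show ?thesis by linarith
qed

lemma real_key2:
  fixes a b :: real
  assumes "0 \<le> a" "0 \<le> b" "\<bar>y1\<bar> \<le> a" "\<bar>y2\<bar> \<le> b"
    "(1 - a\<^sup>2) * (1 - b\<^sup>2) > 0"
    "1 - a\<^sup>2 * b\<^sup>2 + (1 - b\<^sup>2) * y1 + (1 - a\<^sup>2) * y2 > 0"
  shows "a < 1 \<and> b < 1"
proof (rule ccontr)
  assume nab: "\<not> (a < 1 \<and> b < 1)"
  have sq: "x < 1" if "x\<^sup>2 < 1\<^sup>2" "0 \<le> x" for x :: real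
    by (rule power_less_imp_less_base[OF that(1)]) simp
  have sq2: "1 < x" if "1\<^sup>2 < x\<^sup>2" "0 \<le> x" for x :: real
    by (rule power_less_imp_less_base[OF that(1) that(2)])
  from assms(5) have "(0 < 1 - a\<^sup>2 \<and> 0 < 1 - b\<^sup>2) \<or> (1 - a\<^sup>2 < 0 \<and> 1 - b\<^sup>2 < 0)"
    by (simp add: zero_less_mult_iff)
  moreover have "\<not> (0 < 1 - a\<^sup>2 \<and> 0 < 1 - b\<^sup>2)"
    using nab sq[of a] sq[of b] assms(1,2) by auto
  ultimately have n: "1 - a\<^sup>2 < 0" "1 - b\<^sup>2 < 0" by auto
  have ab: "a > 1" "b > 1" using n sq2[of a] sq2[of b] assms(1,2) by auto
  have "(1 - b\<^sup>2) * y1 \<le> (1 - b\<^sup>2) * (-a)"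
    using assms n by (intro mult_left_mono_neg) auto
  moreover have "(1 - a\<^sup>2) * y2 \<le> (1 - a\<^sup>2) * (-b)"
    using assms n by (intro mult_left_mono_neg) auto
  moreover have "1 - a\<^sup>2 * b\<^sup>2 + (1 - b\<^sup>2) * (-a) + (1 - a\<^sup>2) * (-b) = (a-1)*(b-1)*(1-a*b)"
    by (simp add: power2_eq_square algebra_simps)
  moreover have "1 < a * b" using ab by (intro less_1_mult) auto
  moreover have "(a-1)*(b-1)*(1-a*b) < 0"
    using ab calculation by (intro mult_pos_neg) auto
  ultimately show False using assms(6) by linarith
qed

lemma real_key3:
  fixes a :: real
  assumes "0 \<le> a" "\<bar>y\<bar> \<le> a" "1 - a\<^sup>2 * a\<^sup>2 + (1 - a\<^sup>2) * y + (1 - a\<^sup>2) * y > 0"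
  shows "a < 1"
proof (rule ccontr)
  assume "\<not> a < 1"
  then have "1 \<le> a\<^sup>2" by (intro one_le_power) simp
  then have a: "1 - a\<^sup>2 \<le> 0" by simp
  have "(1 - a\<^sup>2) * y \<le> (1 - a\<^sup>2) * (-a)"
    using assms a by (intro mult_left_mono_neg) auto
  moreover have "1 - a\<^sup>2 * a\<^sup>2 + (1 - a\<^sup>2) * (-a) + (1 - a\<^sup>2) * (-a) = (1 - a\<^sup>2) * (1 - a)\<^sup>2"
    by (simp add: power2_eq_square algebra_simps)
  moreover have "(1 - a\<^sup>2) * (1 - a)\<^sup>2 \<le> 0"
    using a by (simp add: mult_nonpos_nonneg)
  ultimately show False using assms(3) by linarith
qed

lemma Jv_good_pos:
  assumes "p \<in> bidisc"
  shows "Imf (Jv p) > 0" "Qf (Jv p) > 0"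
proof -
  have n: "norm (p$1) < 1" "norm (p$2) < 1" using assms by (auto simp: bidisc_def)
  show "Imf (Jv p) > 0" unfolding Imf_Jv
    by (rule real_key1) (use n abs_Im_le_cmod in auto)
  have "(norm (p$1))\<^sup>2 < 1" "(norm (p$2))\<^sup>2 < 1" using n
    by (simp_all add: power_less_one_iff abs_square_less_1)
  then show "Qf (Jv p) > 0" unfolding Qf_Jv by simp
qed

lemma good_den:
  assumes "good x"
  shows "x$2 - \<i> * x$3 \<noteq> 0"
proof
  assume d: "x$2 - \<i> * x$3 = 0"
  then have x2: "x$2 = \<i> * x$3" by simp
  have q: "(x$2)\<^sup>2 + (x$3)\<^sup>2 - (x$4)\<^sup>2 - (x$1)\<^sup>2 = 0" using assms by (simp add: good_def qf_def)
  then have q': "(x$4)\<^sup>2 = - (x$1)\<^sup>2" using x2 by (simp add: power_mult_distrib) (metis minus_minus)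
  have im: "Imf x = - (norm (x$3))\<^sup>2 + Im (x$3 * cnj (x$4))"
    unfolding Imf_def x2 cmod_power2 by (simp add: algebra_simps power2_eq_square)
  have imle: "Im (x$3 * cnj (x$4)) \<le> norm (x$3) * norm (x$4)"
    using abs_Im_le_cmod[of "x$3 * cnj (x$4)"] by (simp add: norm_mult)
  from assms consider "x$1 = 1" "Qf x > 0" | "x$1 = 0" unfolding good_def by blast
  then show False
  proof cases
    case 1
    then have "norm ((x$4)\<^sup>2) = 1" using q' by simp
    then have n4: "norm (x$4) = 1" by (simp add: norm_power power2_eq_1_iff) (metis norm_ge_zero neg_0_le_iff_le not_one_le_zero)
    have "Qf x = 2 * (norm (x$3))\<^sup>2 - 2" unfolding Qf_def x2 using 1 n4 by (simp add: norm_mult)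
    then have "(norm (x$3))\<^sup>2 > 1\<^sup>2" using 1 by simp
    then have n3: "norm (x$3) > 1" by (rule power_less_imp_less_base) simp
    then have "norm (x$3) * (1 - norm (x$3)) < 0" by (intro mult_pos_neg) auto
    then have "Imf x < 0" using im imle n4 by (simp add: power2_eq_square algebra_simps)
    then show False using assms good_def by auto
  next
    case 2
    then have "x$4 = 0" using q' by simp
    then have "Imf x \<le> 0" using im by simp
    then show False using assms good_def by auto
  qed
qed

lemma aux_frac:
  fixes D X Y j :: complex
  assumes "D \<noteq> 0" "j * (D*D + X*Y) = 2 * c * D"
  shows "j * (1 + X/D * (Y/D)) = 2 / D * c"
proof -
  have "j * (1 + X/D * (Y/D)) = (j * (D*D + X*Y)) / (D*D)" using assms(1) by (simp add: field_simps)
  also have "\<dots> = 2 / D * c" using assms by (simp add: field_simps)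
  finally show ?thesis .
qed

lemma aux_frac2:
  fixes D X Y :: complex
  assumes "D \<noteq> 0" "D*D - X*Y = 2 * b * D"
  shows "1 - X/D * (Y/D) = 2 / D * b"
proof -
  have "1 - X/D * (Y/D) = (D*D - X*Y) / (D*D)" using assms(1) by (simp add: field_simps)
  also have "\<dots> = (2 * b * D) / (D*D)" using assms(2) by simp
  also have "\<dots> = 2 / D * b" using assms(1) by (simp add: field_simps)
  finally show ?thesis .
qed

lemma comp_gen:
  fixes a b c e j :: complex
  assumes q: "b*b + c*c - e*e - a*a = 0" and d: "b - j * c \<noteq> 0" and jj: "j * j = -1"
  shows "1 - (a + j*e)/(b - j*c) * ((j*e - a)/(b - j*c)) = 2 / (b - j*c) * b"
        "j * (1 + (a + j*e)/(b - j*c) * ((j*e - a)/(b - j*c))) = 2 / (b - j*c) * c"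
        "(a + j*e)/(b - j*c) - (j*e - a)/(b - j*c) = 2 / (b - j*c) * a"
        "- j * ((a + j*e)/(b - j*c) + (j*e - a)/(b - j*c)) = 2 / (b - j*c) * e"
proof -
  have e1: "(b - j*c)*(b - j*c) - (a + j*e)*(j*e - a) = 2 * b * (b - j*c)"
    using q jj by algebra
  have e2: "j * ((b - j*c)*(b - j*c) + (a + j*e)*(j*e - a)) = 2 * c * (b - j*c)"
    using q jj by algebra
  show "1 - (a + j*e)/(b - j*c) * ((j*e - a)/(b - j*c)) = 2 / (b - j*c) * b"
    by (rule aux_frac2[OF d e1])
  show "j * (1 + (a + j*e)/(b - j*c) * ((j*e - a)/(b - j*c))) = 2 / (b - j*c) * c"
    by (rule aux_frac[OF d e2])
  have e3: "(a + j*e) - (j*e - a) = 2 * a" by algebra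
  show "(a + j*e)/(b - j*c) - (j*e - a)/(b - j*c) = 2 / (b - j*c) * a"
    by (simp only: diff_divide_distrib[symmetric] e3) simp
  have e4: "- j * ((a + j*e) + (j*e - a)) = 2 * e" using jj by algebra
  show "- j * ((a + j*e)/(b - j*c) + (j*e - a)/(b - j*c)) = 2 / (b - j*c) * e"
    by (simp only: add_divide_distrib[symmetric] times_divide_eq_right e4) simp
qed

lemma Jv_Gv:
  assumes "qf x = 0" "x$2 - \<i> * x$3 \<noteq> 0"
  shows "Jv (Gv x) = (2 / (x$2 - \<i> * x$3)) *s x"
proof -
  have q: "x$2*x$2 + x$3*x$3 - x$4*x$4 - x$1*x$1 = 0" using assms(1) by (simp add: qf_def power2_eq_square)
  note c = comp_gen[OF q assms(2), simplified]
  show ?thesis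
    unfolding vec_eq_iff forall_4 Jv_def Gv_def vector_2 vector_4 vector_smult_component
    using c by simp
qed


lemma cont_nth: "continuous_on UNIV (\<lambda>q::complex^'n. q $ i)"
  by (intro linear_continuous_on bounded_linear_vec_nth)

lemma open_bidisc: "open bidisc"
proof -
  have "bidisc = {p. norm (p$1) < 1} \<inter> {p. norm (p$2) < (1::real)}"
    unfolding bidisc_def by auto
  moreover have "open {p::complex^2. norm (p$1) < 1}" "open {p::complex^2. norm (p$2) < (1::real)}"
    by (intro open_Collect_less continuous_on_norm cont_nth continuous_on_const)+
  ultimately show ?thesis by (metis open_Int)
qed

lemma inj_Jmap: "inj_on Jmap S"
proof
  fix p q assume "Jmap p = Jmap q"
  then obtain c where c: "c \<noteq> 0" "Jv q = c *s Jv p" unfolding Jmap_Jv proj_eq by blast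
  have "q = Gv (Jv q)" by (simp add: Gv_Jv)
  also have "\<dots> = Gv (Jv p)" using c by (simp add: Gv_scale)
  also have "\<dots> = p" by (simp add: Gv_Jv)
  finally show "p = q" by simp
qed

lemma Jmap_in:
  assumes "p \<in> bidisc"
  shows "Jmap p \<in> D12"
proof (cases "p$1 = p$2")
  case True
  have "(Jv p)$1 = 0" using True by (simp add: Jv_def)
  then have "good (Jv p)" unfolding good_def using Jv_good_pos[OF assms] qf_Jv by simp
  then show ?thesis unfolding D12_good Jmap_Jv by blast
next
  case False
  define c where "c = 1 / (p$1 - p$2)"
  have c0: "c \<noteq> 0" using False by (simp add: c_def)
  have "(Jv p)$1 = p$1 - p$2" by (simp add: Jv_def)
  then have "(c *s Jv p)$1 = 1" using False by (simp add: c_def)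
  then have "good (c *s Jv p)" unfolding good_def Qf_scale qf_scale Imf_scale
    using Jv_good_pos[OF assms] qf_Jv c0 by simp
  moreover have "Jmap p = proj (c *s Jv p)" unfolding Jmap_Jv proj_eq using c0 by blast
  ultimately show ?thesis unfolding D12_good by blast
qed

lemma good_pre:
  assumes "good x"
  shows "Gv x \<in> bidisc" "Jmap (Gv x) = proj x"
proof -
  define d where "d = x$2 - \<i> * x$3"
  have d: "d \<noteq> 0" using good_den[OF assms] by (simp add: d_def)
  have qx: "qf x = 0" using assms by (simp add: good_def)
  define p where "p = Gv x"
  have J: "Jv p = (2 / d) *s x" unfolding p_def d_def by (rule Jv_Gv[OF qx good_den[OF assms]])
  have "proj x = proj (Jv p)" unfolding proj_eq J by (rule exI[of _ "2/d"]) (simp add: d)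
  then show "Jmap (Gv x) = proj x" by (simp add: p_def Jmap_Jv)
  have X: "x = (d/2) *s Jv p" using d unfolding J by (simp add: vector_smult_assoc)
  have nd: "(norm (d/2))\<^sup>2 > 0" using d by simp
  have I: "Imf (Jv p) > 0" using assms nd unfolding good_def
    by (subst (asm) X, simp only: Imf_scale zero_less_mult_iff) auto
  from assms consider "x$1 = 1" "Qf x > 0" | "x$1 = 0" unfolding good_def by blast
  then show "Gv x \<in> bidisc"
  proof cases
    case 1
    have "Qf (Jv p) > 0" using 1(2) nd
      by (subst (asm) X, simp only: Qf_scale zero_less_mult_iff) auto
    then have "(1 - (norm (p$1))\<^sup>2) * (1 - (norm (p$2))\<^sup>2) > 0" unfolding Qf_Jv by (simp add: zero_less_mult_iff)
    then have "norm (p$1) < 1 \<and> norm (p$2) < 1"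
      using I unfolding Imf_Jv by (intro real_key2[of "norm (p$1)" "norm (p$2)" "Im (p$1)" "Im (p$2)"]) (auto simp: abs_Im_le_cmod)
    then show ?thesis unfolding p_def bidisc_def by simp
  next
    case 2
    have "(Jv p)$1 = 0" unfolding J using 2 by simp
    then have e: "p$2 = p$1" by (simp add: Jv_def)
    have "norm (p$1) < 1"
      using I unfolding Imf_Jv e by (intro real_key3[where y = "Im (p$1)"]) (auto simp: abs_Im_le_cmod)
    then show ?thesis using e unfolding p_def bidisc_def by simp
  qed
qed

lemma image_Jmap: "Jmap ` bidisc = D12"
proof
  show "Jmap ` bidisc \<subseteq> D12" using Jmap_in by auto
  show "D12 \<subseteq> Jmap ` bidisc"
  proof
    fix y assume "y \<in> D12"
    then obtain x where x: "good x" "y = proj x" unfolding D12_good by blast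
    then show "y \<in> Jmap ` bidisc" using good_pre[OF x(1)] by (metis image_eqI)
  qed
qed

lemma cd_uminus: "cd f p \<Longrightarrow> cd (\<lambda>q. - f q) p"
  unfolding cd_def
  apply (elim exE conjE)
  subgoal for f' by (rule exI[of _ "\<lambda>v. - f' v"]) (auto intro!: has_derivative_minus)
  done

lemma cd_Jv: "cd (\<lambda>q. Jv q $ j) p"
  using exhaust_4[of j] by (auto simp: Jv_def intro!: cd_add cd_diff cd_mult cd_nth cd_const cd_uminus)

lemma Jv_nz: "Jv q \<noteq> 0"
proof
  assume "Jv q = 0"
  then have "(Jv q)$2 = 0" "(Jv q)$3 = 0" by simp_all
  then have "1 - q$1 * q$2 = 0" "1 + q$1 * q$2 = 0" by (simp_all add: Jv_def)
  then show False by (simp add: algebra_simps)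
qed

lemma holo_into: "holo_into_CP3 Jmap bidisc"
  unfolding holo_into_CP3_def
proof (intro conjI ballI open_bidisc)
  fix p assume "p \<in> bidisc"
  show "\<exists>U g. open U \<and> p \<in> U \<and> U \<subseteq> bidisc \<and> holo_map g U \<and> (\<forall>q\<in>U. g q \<noteq> 0 \<and> Jmap q = proj (g q))"
    apply (rule exI[of _ bidisc], rule exI[of _ Jv])
    using \<open>p \<in> bidisc\<close> open_bidisc Jv_nz
    by (auto simp: holo_map_def Jmap_Jv intro!: holo_funI cd_Jv)
qed

lemma good_nz: "good x \<Longrightarrow> x \<noteq> 0"
  using good_den by fastforce

lemma cd_Gv: "y$2 - \<i> * y$3 \<noteq> 0 \<Longrightarrow> cd (\<lambda>q. Gv q $ j) y"
  using exhaust_2[of j] by (auto simp: Gv_def intro!: cd_add cd_diff cd_mult cd_nth cd_const cd_divide)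

lemma holo_from: "holo_from_CP3 (inv_into bidisc Jmap) D12"
  unfolding holo_from_CP3_def
proof (intro conjI allI impI)
  show "D12 \<subseteq> CP3"
    unfolding D12_good CP3_def using good_nz by blast
  fix x :: "complex^4" assume xa: "x \<noteq> 0 \<and> proj x \<in> D12"
  then obtain x' where x': "good x'" "proj x = proj x'" unfolding D12_good by blast
  then obtain c where c: "c \<noteq> 0" "x' = c *s x" unfolding proj_eq by blast
  have "x'$2 - \<i> * x'$3 = c * (x$2 - \<i> * x$3)" using c by (simp add: algebra_simps)
  then have dx: "x$2 - \<i> * x$3 \<noteq> 0" using good_den[OF x'(1)] by auto
  define W where "W = {y::complex^4. y$2 - \<i> * y$3 \<noteq> 0}"
  have oW: "open W" unfolding W_def
    by (intro open_Collect_neq continuous_intros cont_nth continuous_on_const)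
  show "\<exists>W h. open W \<and> x \<in> W \<and> holo_map h W \<and>
          (\<forall>y\<in>W. y \<noteq> 0 \<and> proj y \<in> D12 \<longrightarrow> h y = inv_into bidisc Jmap (proj y))"
  proof (intro exI[of _ W] exI[of _ Gv] conjI ballI impI oW)
    show "x \<in> W" using dx by (simp add: W_def)
    show "holo_map Gv W" unfolding holo_map_def
      by (intro allI holo_funI oW) (auto intro!: cd_Gv simp: W_def)
    fix y assume "y \<in> W" "y \<noteq> 0 \<and> proj y \<in> D12"
    then obtain y' where y': "good y'" "proj y = proj y'" unfolding D12_good by blast
    then obtain e where e: "e \<noteq> 0" "y' = e *s y" unfolding proj_eq by blast
    have "inv_into bidisc Jmap (proj y) = inv_into bidisc Jmap (Jmap (Gv y'))"
      using good_pre[OF y'(1)] y' by simp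
    also have "\<dots> = Gv y'" using good_pre[OF y'(1)] by (intro inv_into_f_f inj_Jmap)
    also have "\<dots> = Gv y" using e by (simp add: Gv_scale)
    finally show "Gv y = inv_into bidisc Jmap (proj y)" by simp
  qed
qed

theorem theorem4p8:
  shows "biholo_onto_CP3 Jmap bidisc D12"
  unfolding biholo_onto_CP3_def bij_betw_def
  using inj_Jmap image_Jmap holo_into holo_from by blast

end
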